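(* A graph $G$ has exactly one Grundy total dominating set (i.e., is a unique Grundy total domination graph) if and only if $\gamma_{gr}^{t}(G)=n(G)-i(G)$, where $n(G)$ is the number of vertices and $i(G)$ the number of isolated vertices of $G$.
   Context: For a graph $G$, $N(v)$ denotes the open neighborhood of $v$. A sequence $(v_1,\ldots,v_k)$ of distinct vertices is an open neighborhood sequence if $N(v_i)\setminus\bigcup_{j=1}^{i-1}N(v_j)\neq\emptyset$ for each $i\in[k]$. The Grundy total domination number $\gamma_{gr}^{t}(G)$ is the maximum length of an open neighborhood sequence; the vertex set of such a maximum-length sequence is a Grundy total dominating set. *)

theory Defs
  imports Main
begin

definition simple_graph :: "'a set \<Rightarrow> ('a \<Rightarrow> 'a \<Rightarrow> bool) \<Rightarrow> bool" where
  "simple_graph V E \<longleftrightarrow> finite V \<and>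
     (\<forall>u v. E u v \<longrightarrow> u \<in> V \<and> v \<in> V) \<and>
     (\<forall>u v. E u v \<longrightarrow> E v u) \<and> (\<forall>v. \<not> E v v)"

definition open_nbhd :: "'a set \<Rightarrow> ('a \<Rightarrow> 'a \<Rightarrow> bool) \<Rightarrow> 'a \<Rightarrow> 'a set" where
  "open_nbhd V E v = {u \<in> V. E v u}"

definition open_nbhd_seq :: "'a set \<Rightarrow> ('a \<Rightarrow> 'a \<Rightarrow> bool) \<Rightarrow> 'a list \<Rightarrow> bool" where
  "open_nbhd_seq V E xs \<longleftrightarrow> distinct xs \<and> set xs \<subseteq> V \<and>
     (\<forall>i < length xs. open_nbhd V E (xs ! i) - (\<Union>j<i. open_nbhd V E (xs ! j)) \<noteq> {})"

definition grundy_total_dom_number :: "'a set \<Rightarrow> ('a \<Rightarrow> 'a \<Rightarrow> bool) \<Rightarrow> nat" where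
  "grundy_total_dom_number V E = Max {length xs | xs. open_nbhd_seq V E xs}"

definition grundy_total_dom_sets :: "'a set \<Rightarrow> ('a \<Rightarrow> 'a \<Rightarrow> bool) \<Rightarrow> 'a set set" where
  "grundy_total_dom_sets V E =
     {set xs | xs. open_nbhd_seq V E xs \<and> length xs = grundy_total_dom_number V E}"

definition isolated_vertices :: "'a set \<Rightarrow> ('a \<Rightarrow> 'a \<Rightarrow> bool) \<Rightarrow> 'a set" where
  "isolated_vertices V E = {v \<in> V. open_nbhd V E v = {}}"

end

theory Submission
  imports Defs
begin

lemma ons_iff:
  "open_nbhd_seq V E xs \<longleftrightarrow> distinct xs \<and> set xs \<subseteq> V \<and>
     (\<forall>i<length xs. \<exists>u\<in>V. E (xs!i) u \<and> (\<forall>j<i. \<not> E (xs!j) u))"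
  unfolding open_nbhd_seq_def open_nbhd_def by blast

lemma ons_len:
  assumes "simple_graph V E" "open_nbhd_seq V E xs"
  shows "length xs \<le> card V"
proof -
  have "length xs = card (set xs)" using assms(2) distinct_card
    unfolding open_nbhd_seq_def by metis
  also have "\<dots> \<le> card V" using assms unfolding open_nbhd_seq_def simple_graph_def
    by (simp add: card_mono)
  finally show ?thesis .
qed

lemma gamma_props:
  assumes "simple_graph V E"
  shows "\<exists>xs. open_nbhd_seq V E xs \<and> length xs = grundy_total_dom_number V E"
    and "open_nbhd_seq V E ys \<Longrightarrow> length ys \<le> grundy_total_dom_number V E"
proof -
  let ?L = "{length xs | xs. open_nbhd_seq V E xs}"
  have fin: "finite ?L"
    by (rule finite_subset[of _ "{..card V}"]) (use ons_len[OF assms] in auto)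
  have ne: "?L \<noteq> {}" using ons_iff[of V E "[]"] by auto
  show "\<exists>xs. open_nbhd_seq V E xs \<and> length xs = grundy_total_dom_number V E"
    using Max_in[OF fin ne] unfolding grundy_total_dom_number_def by auto
  show "open_nbhd_seq V E ys \<Longrightarrow> length ys \<le> grundy_total_dom_number V E"
    using Max_ge[OF fin] unfolding grundy_total_dom_number_def by auto
qed

lemma ons_nonisol:
  assumes "open_nbhd_seq V E xs"
  shows "set xs \<subseteq> V - isolated_vertices V E"
proof
  fix x assume "x \<in> set xs"
  then obtain i where i: "i < length xs" "xs!i = x" by (auto simp: in_set_conv_nth)
  thus "x \<in> V - isolated_vertices V E" using assms unfolding open_nbhd_seq_def isolated_vertices_def
    by fastforce
qed

lemma reverse_seq:
  assumes sg: "simple_graph V E" and ons: "open_nbhd_seq V E xs"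
    and g: "\<And>i. i < length xs \<Longrightarrow> g i \<in> V \<and> E (xs!i) (g i) \<and> (\<forall>j<i. \<not> E (xs!j) (g i))"
  shows "open_nbhd_seq V E (map (\<lambda>m. g (length xs - 1 - m)) [0..<length xs])"
proof -
  let ?k = "length xs"
  let ?ys = "map (\<lambda>m. g (?k - 1 - m)) [0..<?k]"
  have sym: "\<And>u v. E u v \<Longrightarrow> E v u" and inV: "\<And>u v. E u v \<Longrightarrow> u \<in> V"
    using sg unfolding simple_graph_def by blast+
  have ginj: "g i \<noteq> g j" if "i < ?k" "j < ?k" "i \<noteq> j" for i j
  proof (cases "i < j")
    case True thus ?thesis using g[OF that(1)] g[OF that(2)] by metis
  next
    case False thus ?thesis using g[OF that(1)] g[OF that(2)] that(3)
      by (metis linorder_neqE_nat)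
  qed
  have "distinct ?ys"
    unfolding distinct_conv_nth using ginj by auto
  moreover have "set ?ys \<subseteq> V" using g by auto
  moreover have "\<forall>m<length ?ys. \<exists>u\<in>V. E (?ys!m) u \<and> (\<forall>j<m. \<not> E (?ys!j) u)"
  proof (intro allI impI)
    fix m assume m: "m < length ?ys"
    hence mk: "m < ?k" by simp
    let ?i = "?k - 1 - m"
    have ik: "?i < ?k" using mk by simp
    have "xs ! ?i \<in> V" using ons ik unfolding open_nbhd_seq_def by auto
    moreover have "E (?ys!m) (xs ! ?i)" using g[OF ik] sym mk by simp
    moreover have "\<not> E (?ys!j) (xs ! ?i)" if "j < m" for j
    proof
      assume "E (?ys!j) (xs ! ?i)"
      hence "E (xs ! ?i) (g (?k - 1 - j))" using sym that mk by simp
      moreover have "?i < ?k - 1 - j" "?k - 1 - j < ?k" using that mk by auto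
      ultimately show False using g by blast
    qed
    ultimately show "\<exists>u\<in>V. E (?ys!m) u \<and> (\<forall>j<m. \<not> E (?ys!j) u)" by blast
  qed
  ultimately show ?thesis unfolding ons_iff by blast
qed

theorem corollary5p3:
  assumes "simple_graph V E"
  shows "card (grundy_total_dom_sets V E) = 1 \<longleftrightarrow>
         grundy_total_dom_number V E = card V - card (isolated_vertices V E)"
proof -
  let ?g = "grundy_total_dom_number V E"
  let ?V' = "V - isolated_vertices V E"
  have finV: "finite V" using assms unfolding simple_graph_def by blast
  have sym: "\<And>u v. E u v \<Longrightarrow> E v u" and inV: "\<And>u v. E u v \<Longrightarrow> u \<in> V \<and> v \<in> V"
    using assms unfolding simple_graph_def by blast+
  have cV': "card ?V' = card V - card (isolated_vertices V E)"
    by (rule card_Diff_subset) (use finV in \<open>auto simp: isolated_vertices_def intro: finite_subset\<close>)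
  obtain xs where xs: "open_nbhd_seq V E xs" "length xs = ?g"
    using gamma_props(1)[OF assms] by blast
  have lenS: "card (set xs) = ?g" using xs distinct_card unfolding open_nbhd_seq_def by metis
  have Ssub: "set xs \<subseteq> ?V'" using ons_nonisol[OF xs(1)] .
  have gle: "?g \<le> card ?V'" using lenS Ssub finV
    by (metis card_mono finite_Diff)
  show ?thesis
  proof
    assume c1: "card (grundy_total_dom_sets V E) = 1"
    have Sin: "set xs \<in> grundy_total_dom_sets V E"
      unfolding grundy_total_dom_sets_def using xs by blast
    have uniq: "A = set xs" if "A \<in> grundy_total_dom_sets V E" for A
      using c1 Sin that by (metis card_1_singletonE singletonD)
    let ?k = "length xs"
    have T: "a \<in> set xs" if "i < ?k" "E (xs!i) a" for i a
    proof -
      define i0 where "i0 = (LEAST i. i < ?k \<and> E (xs!i) a)"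
      have i0: "i0 < ?k" "E (xs!i0) a" using LeastI[of "\<lambda>i. i < ?k \<and> E (xs!i) a" i] that
        unfolding i0_def by auto
      have i0min: "\<not> E (xs!j) a" if "j < i0" for j
        using not_less_Least[of j "\<lambda>i. i < ?k \<and> E (xs!i) a"] that i0(1) unfolding i0_def by auto
      define g where "g j = (if j = i0 then a else
          (SOME u. u \<in> V \<and> E (xs!j) u \<and> (\<forall>l<j. \<not> E (xs!l) u)))" for j
      have gp: "g j \<in> V \<and> E (xs!j) (g j) \<and> (\<forall>l<j. \<not> E (xs!l) (g j))" if "j < ?k" for j
      proof (cases "j = i0")
        case True thus ?thesis using i0 i0min inV unfolding g_def by auto
      next
        case False
        have "\<exists>u. u \<in> V \<and> E (xs!j) u \<and> (\<forall>l<j. \<not> E (xs!l) u)"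
          using xs(1) that unfolding ons_iff by blast
        from someI_ex[OF this] False show ?thesis unfolding g_def by simp
      qed
      have "a \<in> set (map (\<lambda>m. g (?k - 1 - m)) [0..<?k])"
      proof -
        have "?k - 1 - (?k - 1 - i0) = i0" using i0 by auto
        moreover have "g i0 = a" unfolding g_def by simp
        ultimately show ?thesis using i0(1) by (auto simp: image_iff intro!: bexI[of _ "?k - 1 - i0"])
      qed
      moreover have "set (map (\<lambda>m. g (?k - 1 - m)) [0..<?k]) \<in> grundy_total_dom_sets V E"
      proof -
        have "open_nbhd_seq V E (map (\<lambda>m. g (?k - 1 - m)) [0..<?k])"
          using reverse_seq[OF assms xs(1), of g] gp by blast
        moreover have "length (map (\<lambda>m. g (?k - 1 - m)) [0..<?k]) = ?g" using xs(2) by simp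
        ultimately show ?thesis unfolding grundy_total_dom_sets_def by blast
      qed
      ultimately show ?thesis using uniq by blast
    qed
    have "?V' \<subseteq> set xs"
    proof
      fix v assume v: "v \<in> ?V'"
      show "v \<in> set xs"
      proof (rule ccontr)
        assume vS: "v \<notin> set xs"
        obtain w where w: "E v w" using v unfolding isolated_vertices_def open_nbhd_def by auto
        have "\<exists>i<?k. E (xs!i) w"
        proof (rule ccontr)
          assume "\<not> ?thesis"
          hence "open_nbhd_seq V E (xs @ [v])" using xs(1) vS w inV
            unfolding ons_iff by (auto simp: nth_append)
          from gamma_props(2)[OF assms this] xs(2) show False by simp
        qed
        then obtain i where "i < ?k" "E (xs!i) w" by blast
        hence "w \<in> set xs" using T by blast
        then obtain j where "j < ?k" "xs!j = w" by (auto simp: in_set_conv_nth)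
        thus False using T[of j v] sym[OF w] vS by simp
      qed
    qed
    hence "card ?V' \<le> ?g" using lenS by (metis card_mono List.finite_set)
    thus "?g = card V - card (isolated_vertices V E)" using gle cV' by simp
  next
    assume eq: "?g = card V - card (isolated_vertices V E)"
    have "grundy_total_dom_sets V E = {?V'}"
    proof -
      have "A = ?V'" if Ain: "A \<in> grundy_total_dom_sets V E" for A
      proof -
        obtain ys where ys: "A = set ys" "open_nbhd_seq V E ys" "length ys = ?g"
          using Ain unfolding grundy_total_dom_sets_def by blast
        have "card A = card ?V'" using ys eq cV' distinct_card unfolding open_nbhd_seq_def by metis
        thus ?thesis using ons_nonisol[OF ys(2)] ys(1) finV
          by (metis card_subset_eq finite_Diff)
      qed
      moreover have "set xs = ?V'" using lenS eq cV' Ssub finV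
        by (metis card_subset_eq finite_Diff)
      hence "?V' \<in> grundy_total_dom_sets V E"
        unfolding grundy_total_dom_sets_def using xs by blast
      ultimately show ?thesis by blast
    qed
    thus "card (grundy_total_dom_sets V E) = 1" by simp
  qed
qed

end
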